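(* Let $G$ be a finite simple undirected graph without isolated vertices and let $v_0 \in V(G)$. Then $$\tau(G) \le \sum_{v \in N[v_0]} TDV_G(v) \le \tau(G)\cdot \gamma_t(G),$$ and both bounds are sharp (i.e., each is attained with equality for some such graph $G$ and vertex $v_0$).
   Context: A set $D \subseteq V(G)$ is a total dominating set (TDS) of $G$ if every vertex $v\in V(G)$ has a neighbor in $D$. The total domination number $\gamma_t(G)$ is the minimum cardinality of a TDS; a TDS of cardinality $\gamma_t(G)$ is a $\gamma_t(G)$-set. $\tau(G)$ denotes the number of $\gamma_t(G)$-sets, and for $v\in V(G)$, the total domination value $TDV_G(v)$ is the number of $\gamma_t(G)$-sets containing $v$. $N[v_0]=N(v_0)\cup\{v_0\}$ is the closed neighborhood of $v_0$. *)

theory Defs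
  imports Main
begin

definition simple_graph :: "'a set \<Rightarrow> ('a \<Rightarrow> 'a \<Rightarrow> bool) \<Rightarrow> bool" where
  "simple_graph V E \<longleftrightarrow> finite V \<and> (\<forall>u v. E u v \<longrightarrow> u \<in> V \<and> v \<in> V)
     \<and> (\<forall>u v. E u v \<longrightarrow> E v u) \<and> (\<forall>v. \<not> E v v)"

definition no_isolated :: "'a set \<Rightarrow> ('a \<Rightarrow> 'a \<Rightarrow> bool) \<Rightarrow> bool" where
  "no_isolated V E \<longleftrightarrow> (\<forall>v\<in>V. \<exists>u. E v u)"

definition open_nbhd :: "('a \<Rightarrow> 'a \<Rightarrow> bool) \<Rightarrow> 'a \<Rightarrow> 'a set" where
  "open_nbhd E v = {u. E v u}"

definition closed_nbhd :: "('a \<Rightarrow> 'a \<Rightarrow> bool) \<Rightarrow> 'a \<Rightarrow> 'a set" where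
  "closed_nbhd E v = insert v (open_nbhd E v)"

definition is_tds :: "'a set \<Rightarrow> ('a \<Rightarrow> 'a \<Rightarrow> bool) \<Rightarrow> 'a set \<Rightarrow> bool" where
  "is_tds V E D \<longleftrightarrow> D \<subseteq> V \<and> (\<forall>v\<in>V. \<exists>u\<in>D. E v u)"

definition gamma_t :: "'a set \<Rightarrow> ('a \<Rightarrow> 'a \<Rightarrow> bool) \<Rightarrow> nat" where
  "gamma_t V E = Min (card ` {D. is_tds V E D})"

definition gamma_t_sets :: "'a set \<Rightarrow> ('a \<Rightarrow> 'a \<Rightarrow> bool) \<Rightarrow> 'a set set" where
  "gamma_t_sets V E = {D. is_tds V E D \<and> card D = gamma_t V E}"

definition tau :: "'a set \<Rightarrow> ('a \<Rightarrow> 'a \<Rightarrow> bool) \<Rightarrow> nat" where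
  "tau V E = card (gamma_t_sets V E)"

definition TDV :: "'a set \<Rightarrow> ('a \<Rightarrow> 'a \<Rightarrow> bool) \<Rightarrow> 'a \<Rightarrow> nat" where
  "TDV V E v = card {D \<in> gamma_t_sets V E. v \<in> D}"

end

theory Submission
  imports Defs
begin

lemma general_bounds:
  assumes sg: "simple_graph V E" and ni: "no_isolated V E" and v0: "v0 \<in> V"
  shows "tau V E \<le> (\<Sum>v\<in>closed_nbhd E v0. TDV V E v) \<and>
         (\<Sum>v\<in>closed_nbhd E v0. TDV V E v) \<le> tau V E * gamma_t V E"
proof -
  let ?S = "gamma_t_sets V E" and ?N = "closed_nbhd E v0"
  have fV: "finite V" using sg by (simp add: simple_graph_def)
  have EV: "\<And>u v. E u v \<Longrightarrow> u \<in> V \<and> v \<in> V" using sg by (simp add: simple_graph_def)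
  have NV: "?N \<subseteq> V" using v0 EV by (auto simp: closed_nbhd_def open_nbhd_def)
  have fN: "finite ?N" using NV fV finite_subset by blast
  have fT: "finite {D. is_tds V E D}"
    by (rule finite_subset[of _ "Pow V"]) (auto simp: is_tds_def fV)
  have fS: "finite ?S" using fT by (rule rev_finite_subset) (auto simp: gamma_t_sets_def)
  have Sprops: "\<And>D. D \<in> ?S \<Longrightarrow> D \<subseteq> V \<and> card D = gamma_t V E \<and> (\<exists>u\<in>D. E v0 u)"
    using v0 by (auto simp: gamma_t_sets_def is_tds_def)
  have swap: "(\<Sum>v\<in>?N. TDV V E v) = (\<Sum>D\<in>?S. card (?N \<inter> D))"
  proof -
    have "(\<Sum>v\<in>?N. TDV V E v) = (\<Sum>v\<in>?N. \<Sum>D\<in>?S. if v \<in> D then 1 else 0)"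
      unfolding TDV_def using fS by (simp add: sum.If_cases Int_def)
    also have "\<dots> = (\<Sum>D\<in>?S. \<Sum>v\<in>?N. if v \<in> D then 1 else 0)" by (rule sum.swap)
    also have "\<dots> = (\<Sum>D\<in>?S. card (?N \<inter> D))"
      using fN by (simp add: sum.If_cases Int_def)
    finally show ?thesis .
  qed
  have lo: "\<And>D. D \<in> ?S \<Longrightarrow> 1 \<le> card (?N \<inter> D)"
  proof -
    fix D assume D: "D \<in> ?S"
    then obtain u where "u \<in> D" "E v0 u" using Sprops by blast
    hence "u \<in> ?N \<inter> D" by (simp add: closed_nbhd_def open_nbhd_def)
    thus "1 \<le> card (?N \<inter> D)" using fN
      by (metis One_nat_def Suc_leI card_gt_0_iff empty_iff finite_Int)
  qed
  have hi: "\<And>D. D \<in> ?S \<Longrightarrow> card (?N \<inter> D) \<le> gamma_t V E"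
  proof -
    fix D assume D: "D \<in> ?S"
    hence "finite D" using Sprops fV finite_subset by blast
    thus "card (?N \<inter> D) \<le> gamma_t V E" using Sprops[OF D]
      by (metis card_mono inf_le2)
  qed
  have "tau V E = (\<Sum>D\<in>?S. 1)" by (simp add: tau_def)
  also have "\<dots> \<le> (\<Sum>D\<in>?S. card (?N \<inter> D))" by (rule sum_mono) (rule lo)
  finally have 1: "tau V E \<le> (\<Sum>v\<in>?N. TDV V E v)" using swap by simp
  have "(\<Sum>D\<in>?S. card (?N \<inter> D)) \<le> (\<Sum>D\<in>?S. gamma_t V E)" by (rule sum_mono) (rule hi)
  hence 2: "(\<Sum>v\<in>?N. TDV V E v) \<le> tau V E * gamma_t V E" using swap by (simp add: tau_def)
  show ?thesis using 1 2 by (rule conjI)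
qed

definition EP4 :: "nat \<Rightarrow> nat \<Rightarrow> bool" where
  "EP4 u v \<longleftrightarrow> (u,v) \<in> {(0,1),(1,0),(1,2),(2,1),(2,3),(3,2)}"

definition EP2 :: "nat \<Rightarrow> nat \<Rightarrow> bool" where
  "EP2 u v \<longleftrightarrow> (u,v) \<in> {(0,1),(1,0)}"

lemma P4_tds: "is_tds {0,1,2,3} EP4 D \<longleftrightarrow> {1,2} \<subseteq> D \<and> D \<subseteq> {0,1,2,3}"
  unfolding is_tds_def EP4_def by auto

lemma P4_gamma: "gamma_t {0,1,2,3} EP4 = 2"
proof -
  have A: "card ` {D. is_tds {0,1,2,3} EP4 D} = card ` {D. {1::nat,2} \<subseteq> D \<and> D \<subseteq> {0,1,2,3}}"
    unfolding P4_tds ..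
  have "2 \<in> card ` {D. {1::nat,2} \<subseteq> D \<and> D \<subseteq> {0,1,2,3}}"
    by (rule image_eqI[of _ _ "{1,2}"]) auto
  note m = this
  have lb: "\<forall>x \<in> card ` {D. {1::nat,2} \<subseteq> D \<and> D \<subseteq> {0,1,2,3}}. 2 \<le> x"
  proof
    fix x assume "x \<in> card ` {D. {1::nat,2} \<subseteq> D \<and> D \<subseteq> {0,1,2,3}}"
    then obtain D where "x = card D" "{1::nat,2} \<subseteq> D" "D \<subseteq> {0,1,2,3}" by auto
    moreover have "finite D" using \<open>D \<subseteq> _\<close> finite_subset by blast
    ultimately show "2 \<le> x" using card_mono[of D "{1::nat,2}"] by simp
  qed
  have fin: "finite (card ` {D. {1::nat,2} \<subseteq> D \<and> D \<subseteq> {0,1,2,3}})"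
    by (rule finite_imageI, rule finite_subset[of _ "Pow {0,1,2,3}"]) auto
  show ?thesis unfolding gamma_t_def A
    using lb m by (intro Min_eqI[OF fin]) blast+
qed

lemma P4_sets: "gamma_t_sets {0,1,2,3} EP4 = {{1,2}}"
proof -
  have "\<And>D. ({1::nat,2} \<subseteq> D \<and> D \<subseteq> {0,1,2,3} \<and> card D = 2) \<longleftrightarrow> D = {1,2}"
  proof
    fix D :: "nat set" assume h: "{1::nat,2} \<subseteq> D \<and> D \<subseteq> {0,1,2,3} \<and> card D = 2"
    hence "finite D" using finite_subset by blast
    thus "D = {1,2}" using h card_subset_eq[of D "{1,2}"] by simp
  qed auto
  thus ?thesis unfolding gamma_t_sets_def P4_gamma P4_tds by auto
qed

lemma P2_tds: "is_tds {0,1} EP2 D \<longleftrightarrow> D = {0,1}"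
  unfolding is_tds_def EP2_def by auto

lemma P2_c: "{D. is_tds {0::nat,1} EP2 D} = {{0,1}}"
  unfolding P2_tds by blast

lemma P2_gamma: "gamma_t {0,1} EP2 = 2"
  unfolding gamma_t_def P2_c by simp

lemma P2_sets: "gamma_t_sets {0,1} EP2 = {{0,1}}"
  unfolding gamma_t_sets_def P2_gamma P2_tds by auto

lemma P4_graph: "simple_graph {0::nat,1,2,3} EP4 \<and> no_isolated {0::nat,1,2,3} EP4"
  unfolding simple_graph_def no_isolated_def EP4_def by auto

lemma P2_graph: "simple_graph {0::nat,1} EP2 \<and> no_isolated {0::nat,1} EP2"
  unfolding simple_graph_def no_isolated_def EP2_def by auto

lemma P4_N: "closed_nbhd EP4 0 = {0,1}" by (auto simp: closed_nbhd_def open_nbhd_def EP4_def)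
lemma P2_N: "closed_nbhd EP2 0 = {0,1}" by (auto simp: closed_nbhd_def open_nbhd_def EP2_def)

lemma single_filter: "{D \<in> {X}. P D} = (if P X then {X} else {})" by auto

lemma P4_eq: "tau {0,1,2,3} EP4 = (\<Sum>v\<in>closed_nbhd EP4 0. TDV {0,1,2,3} EP4 v)"
proof -
  have "TDV {0,1,2,3} EP4 0 = 0" unfolding TDV_def P4_sets single_filter by simp
  moreover have "TDV {0,1,2,3} EP4 1 = 1" unfolding TDV_def P4_sets single_filter by simp
  moreover have "tau {0,1,2,3} EP4 = 1" unfolding tau_def P4_sets single_filter by simp
  ultimately show ?thesis unfolding P4_N by simp
qed

lemma P2_eq: "(\<Sum>v\<in>closed_nbhd EP2 0. TDV {0,1} EP2 v) = tau {0,1} EP2 * gamma_t {0,1} EP2"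
proof -
  have "TDV {0,1} EP2 0 = 1" unfolding TDV_def P2_sets single_filter by simp
  moreover have "TDV {0,1} EP2 1 = 1" unfolding TDV_def P2_sets single_filter by simp
  moreover have "tau {0,1} EP2 = 1" unfolding tau_def P2_sets single_filter by simp
  ultimately show ?thesis unfolding P2_N P2_gamma by simp
qed

theorem proposition2p4:
  shows "(\<forall>(V :: 'a set) E v0. simple_graph V E \<and> no_isolated V E \<and> v0 \<in> V \<longrightarrow>
            tau V E \<le> (\<Sum>v\<in>closed_nbhd E v0. TDV V E v) \<and>
            (\<Sum>v\<in>closed_nbhd E v0. TDV V E v) \<le> tau V E * gamma_t V E)
       \<and> (\<exists>(V :: nat set) E v0. simple_graph V E \<and> no_isolated V E \<and> v0 \<in> V \<and>
            tau V E = (\<Sum>v\<in>closed_nbhd E v0. TDV V E v))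
       \<and> (\<exists>(V :: nat set) E v0. simple_graph V E \<and> no_isolated V E \<and> v0 \<in> V \<and>
            (\<Sum>v\<in>closed_nbhd E v0. TDV V E v) = tau V E * gamma_t V E)"
proof (intro conjI)
  show "\<forall>(V :: 'a set) E v0. simple_graph V E \<and> no_isolated V E \<and> v0 \<in> V \<longrightarrow>
            tau V E \<le> (\<Sum>v\<in>closed_nbhd E v0. TDV V E v) \<and>
            (\<Sum>v\<in>closed_nbhd E v0. TDV V E v) \<le> tau V E * gamma_t V E"
  proof (intro allI impI)
    fix V :: "'a set" and E v0
    assume h: "simple_graph V E \<and> no_isolated V E \<and> v0 \<in> V"
    show "tau V E \<le> (\<Sum>v\<in>closed_nbhd E v0. TDV V E v) \<and>
            (\<Sum>v\<in>closed_nbhd E v0. TDV V E v) \<le> tau V E * gamma_t V E"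
      using h by (intro general_bounds) (elim conjE, assumption)+
  qed
next
  show "\<exists>(V :: nat set) E v0. simple_graph V E \<and> no_isolated V E \<and> v0 \<in> V \<and>
            tau V E = (\<Sum>v\<in>closed_nbhd E v0. TDV V E v)"
    using P4_graph P4_eq by (intro exI[of _ "{0,1,2,3}"] exI[of _ EP4] exI[of _ 0]) simp
next
  show "\<exists>(V :: nat set) E v0. simple_graph V E \<and> no_isolated V E \<and> v0 \<in> V \<and>
            (\<Sum>v\<in>closed_nbhd E v0. TDV V E v) = tau V E * gamma_t V E"
    using P2_graph P2_eq by (intro exI[of _ "{0,1}"] exI[of _ EP2] exI[of _ 0]) simp
qed

end
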